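(* Let $(X,d)$ be a finite ultrametric space. Then for every $\varepsilon>0$ there exists $(Y,\rho)\in\mathfrak U$ such that $|X|=|Y|$ and $d_{GH}(\operatorname{is}(X),\operatorname{is}(Y))<\varepsilon$.
   Context: $\operatorname{Sp}(X)=\{d(x,y):x\neq y\}$; $\mathfrak U$ is the class of finite ultrametric spaces $X$ with $|\operatorname{Sp}(X)|=|X|-1$. $\operatorname{is}(X)$ denotes the isometry type of $X$. For bounded metric spaces $X,Y$ and $\varepsilon>0$, $d_{GH}(\operatorname{is}(X),\operatorname{is}(Y))<\varepsilon$ iff there is a metric space $(Z,d_Z)$ with subspaces $X',Y'$ isometric to $X,Y$ such that each point of $X'$ lies at $d_Z$-distance $<\varepsilon$ from some point of $Y'$ and each point of $Y'$ lies at distance $<\varepsilon$ from some point of $X'$. *)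

theory Defs
  imports Main "HOL.Real"
begin

text \<open>A metric space is represented by a carrier set together with a real-valued
distance function (only its values on the carrier matter).\<close>

definition metric_on :: "'a set \<Rightarrow> ('a \<Rightarrow> 'a \<Rightarrow> real) \<Rightarrow> bool" where
  "metric_on S d \<longleftrightarrow>
     (\<forall>x\<in>S. \<forall>y\<in>S. d x y \<ge> 0 \<and> (d x y = 0 \<longleftrightarrow> x = y) \<and> d x y = d y x) \<and>
     (\<forall>x\<in>S. \<forall>y\<in>S. \<forall>z\<in>S. d x z \<le> d x y + d y z)"

definition ultrametric_on :: "'a set \<Rightarrow> ('a \<Rightarrow> 'a \<Rightarrow> real) \<Rightarrow> bool" where
  "ultrametric_on S d \<longleftrightarrow> metric_on S d \<and>
     (\<forall>x\<in>S. \<forall>y\<in>S. \<forall>z\<in>S. d x z \<le> max (d x y) (d y z))"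

definition Sp :: "'a set \<Rightarrow> ('a \<Rightarrow> 'a \<Rightarrow> real) \<Rightarrow> real set" where
  "Sp S d = {d x y | x y. x \<in> S \<and> y \<in> S \<and> x \<noteq> y}"

definition in_U :: "'a set \<Rightarrow> ('a \<Rightarrow> 'a \<Rightarrow> real) \<Rightarrow> bool" where
  "in_U S d \<longleftrightarrow> finite S \<and> ultrametric_on S d \<and> card (Sp S d) = card S - 1"

definition isometric_embedding ::
  "('a \<Rightarrow> 'c) \<Rightarrow> 'a set \<Rightarrow> ('a \<Rightarrow> 'a \<Rightarrow> real) \<Rightarrow> 'c set \<Rightarrow> ('c \<Rightarrow> 'c \<Rightarrow> real) \<Rightarrow> bool" where
  "isometric_embedding f S d T e \<longleftrightarrow>
     f ` S \<subseteq> T \<and> (\<forall>x\<in>S. \<forall>y\<in>S. e (f x) (f y) = d x y)"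

text \<open>d_GH(is(X), is(Y)) < eps, via the characterization in the paper: there is a metric
space Z containing isometric copies X' = f`X and Y' = g`Y, each point of one copy
being at distance < eps from some point of the other. The ambient space Z may be taken
(without loss of generality, by restricting to X' \<union> Y') with carrier in the type 'a + 'b.\<close>
definition GH_dist_less ::
  "'a set \<Rightarrow> ('a \<Rightarrow> 'a \<Rightarrow> real) \<Rightarrow> 'b set \<Rightarrow> ('b \<Rightarrow> 'b \<Rightarrow> real) \<Rightarrow> real \<Rightarrow> bool" where
  "GH_dist_less X dX Y dY eps \<longleftrightarrow>
     (\<exists>(Z :: ('a + 'b) set) dZ f g.
        metric_on Z dZ \<and>
        isometric_embedding f X dX Z dZ \<and>
        isometric_embedding g Y dY Z dZ \<and>
        (\<forall>x\<in>X. \<exists>y\<in>Y. dZ (f x) (g y) < eps) \<and>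
        (\<forall>y\<in>Y. \<exists>x\<in>X. dZ (f x) (g y) < eps))"

end

theory Submission
  imports Defs
begin

definition ext :: "'a \<Rightarrow> 'a \<Rightarrow> real \<Rightarrow> ('a \<Rightarrow> 'a \<Rightarrow> real) \<Rightarrow> 'a \<Rightarrow> 'a \<Rightarrow> real" where
  "ext a y0 t p x y = (if x = a \<and> y = a then 0 else if x = a then (if y = y0 then t else p y0 y)
     else if y = a then (if x = y0 then t else p x y0) else p x y)"

lemma ultra_sub: "ultrametric_on X d \<Longrightarrow> S \<subseteq> X \<Longrightarrow> ultrametric_on S d"
  unfolding ultrametric_on_def metric_on_def by blast

lemma ultra_metric:
  assumes "\<forall>x\<in>S. \<forall>y\<in>S. p x y \<ge> 0 \<and> (p x y = 0 \<longleftrightarrow> x = y) \<and> p x y = p y x"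
    "\<forall>x\<in>S. \<forall>y\<in>S. \<forall>z\<in>S. p x z \<le> max (p x y) (p y z)"
  shows "ultrametric_on S p"
  unfolding ultrametric_on_def metric_on_def
proof (intro conjI assms(1) assms(2) ballI)
  fix x y z assume "x \<in> S" "y \<in> S" "z \<in> S"
  then have "p x z \<le> max (p x y) (p y z)" "p x y \<ge> 0" "p y z \<ge> 0" using assms by auto
  then show "p x z \<le> p x y + p y z" by linarith
qed

lemma ext_ultra:
  assumes u: "ultrametric_on S p" and y0: "y0 \<in> S" and a: "a \<notin> S" and t: "0 < t"
    and lt: "\<forall>y\<in>S. y \<noteq> y0 \<longrightarrow> t < p y0 y"
  shows "ultrametric_on (insert a S) (ext a y0 t p)"
proof (rule ultra_metric)
  have m: "\<forall>x\<in>S. \<forall>y\<in>S. p x y \<ge> 0 \<and> (p x y = 0 \<longleftrightarrow> x = y) \<and> p x y = p y x"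
    and um: "\<forall>x\<in>S. \<forall>y\<in>S. \<forall>z\<in>S. p x z \<le> max (p x y) (p y z)"
    using u unfolding ultrametric_on_def metric_on_def by auto
  show "\<forall>x\<in>insert a S. \<forall>y\<in>insert a S. ext a y0 t p x y \<ge> 0 \<and> (ext a y0 t p x y = 0 \<longleftrightarrow> x = y) \<and> ext a y0 t p x y = ext a y0 t p y x"
    using m y0 a t unfolding ext_def by auto
  show "\<forall>x\<in>insert a S. \<forall>y\<in>insert a S. \<forall>z\<in>insert a S. ext a y0 t p x z \<le> max (ext a y0 t p x y) (ext a y0 t p y z)"
  proof (intro ballI)
    fix x y z assume xyz: "x \<in> insert a S" "y \<in> insert a S" "z \<in> insert a S"
    have lt': "\<And>y. y \<in> S \<Longrightarrow> y \<noteq> y0 \<Longrightarrow> t < p y y0" using lt m y0 by fastforce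
    show "ext a y0 t p x z \<le> max (ext a y0 t p x y) (ext a y0 t p y z)"
      using xyz m um y0 a t lt lt' unfolding ext_def
      apply (cases "x = a"; cases "y = a"; cases "z = a"; cases "x = y0"; cases "y = y0"; cases "z = y0")
      apply (simp_all add: max_def split: if_splits)
      by (smt (verit))+
  qed
qed

lemma ext_Sp:
  assumes y0: "y0 \<in> S" and a: "a \<notin> S"
    and sym: "\<forall>x\<in>S. \<forall>y\<in>S. p x y = p y x"
  shows "Sp (insert a S) (ext a y0 t p) = insert t (Sp S p)"
proof
  show "Sp (insert a S) (ext a y0 t p) \<subseteq> insert t (Sp S p)"
  proof
    fix v assume "v \<in> Sp (insert a S) (ext a y0 t p)"
    then obtain x y where xy: "x \<in> insert a S" "y \<in> insert a S" "x \<noteq> y" "v = ext a y0 t p x y"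
      unfolding Sp_def by blast
    show "v \<in> insert t (Sp S p)"
      using xy y0 a unfolding ext_def Sp_def by (auto split: if_splits)
  qed
  show "insert t (Sp S p) \<subseteq> Sp (insert a S) (ext a y0 t p)"
  proof
    fix v assume "v \<in> insert t (Sp S p)"
    then consider "v = t" | "v \<in> Sp S p" by blast
    then show "v \<in> Sp (insert a S) (ext a y0 t p)"
    proof cases
      case 1
      have "ext a y0 t p a y0 = t" "a \<noteq> y0" using y0 a unfolding ext_def by auto
      then show ?thesis using 1 y0 unfolding Sp_def by (metis (mono_tags, lifting) insertCI mem_Collect_eq)
    next
      case 2
      then obtain x y where xy: "x \<in> S" "y \<in> S" "x \<noteq> y" "v = p x y" unfolding Sp_def by blast
      have "ext a y0 t p x y = p x y" using xy a unfolding ext_def by auto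
      then show ?thesis using xy unfolding Sp_def by force
    qed
  qed
qed

lemma build:
  assumes "finite X" "ultrametric_on X d" "eta > 0"
  shows "\<exists>\<rho>. in_U X \<rho> \<and> (\<forall>x\<in>X. \<forall>y\<in>X. x \<noteq> y \<longrightarrow> d x y < \<rho> x y \<and> \<rho> x y \<le> d x y + eta)"
  using assms(1,2)
proof (induction "card X" arbitrary: X rule: less_induct)
  case less
  note fin = less.prems(1) and U = less.prems(2)
  have dm: "\<forall>x\<in>X. \<forall>y\<in>X. d x y \<ge> 0 \<and> (d x y = 0 \<longleftrightarrow> x = y) \<and> d x y = d y x"
    and dum: "\<forall>x\<in>X. \<forall>y\<in>X. \<forall>z\<in>X. d x z \<le> max (d x y) (d y z)"
    using U unfolding ultrametric_on_def metric_on_def by auto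
  show ?case
  proof (cases "card X \<le> 1")
    case True
    have "Sp X d = {}"
    proof -
      { fix x y assume "x \<in> X" "y \<in> X" "x \<noteq> y"
        then have "card {x, y} \<le> card X" using fin by (intro card_mono) auto
        with \<open>x \<noteq> y\<close> True have False by simp }
      then show ?thesis unfolding Sp_def by blast
    qed
    then have "in_U X d" using fin U True unfolding in_U_def by simp
    moreover have "\<forall>x\<in>X. \<forall>y\<in>X. x \<noteq> y \<longrightarrow> False"
    proof (intro ballI impI)
      fix x y assume "x \<in> X" "y \<in> X" "x \<noteq> y"
      then have "card {x, y} \<le> card X" using fin by (intro card_mono) auto
      with \<open>x \<noteq> y\<close> True show False by simp
    qed
    ultimately show ?thesis by blast
  next
    case False
    then obtain x1 x2 where x12: "x1 \<in> X" "x2 \<in> X" "x1 \<noteq> x2"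
      using card_le_Suc0_iff_eq[OF fin] by auto
    have finSp: "finite (Sp X d)"
    proof -
      have "Sp X d \<subseteq> (\<lambda>(x,y). d x y) ` (X \<times> X)" unfolding Sp_def by auto
      then show ?thesis using fin finite_subset by blast
    qed
    have neSp: "Sp X d \<noteq> {}" using x12 unfolding Sp_def by blast
    define r where "r = Min (Sp X d)"
    have "r \<in> Sp X d" unfolding r_def using finSp neSp by simp
    then obtain a y0 where ay: "a \<in> X" "y0 \<in> X" "a \<noteq> y0" "d a y0 = r" unfolding Sp_def by blast
    have rmin: "\<And>x y. x \<in> X \<Longrightarrow> y \<in> X \<Longrightarrow> x \<noteq> y \<Longrightarrow> r \<le> d x y"
      unfolding r_def using finSp by (intro Min_le) (auto simp: Sp_def)
    have rpos: "r > 0" using ay dm by fastforce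
    define S where "S = X - {a}"
    have S: "finite S" "a \<notin> S" "y0 \<in> S" "X = insert a S" "card S < card X"
      using ay fin unfolding S_def by (auto simp: card_gt_0_iff) (metis card_gt_0_iff diff_less empty_iff zero_less_one One_nat_def)
    have US: "ultrametric_on S d" using U ultra_sub unfolding S_def by blast
    obtain p where p: "in_U S p" "\<forall>x\<in>S. \<forall>y\<in>S. x \<noteq> y \<longrightarrow> d x y < p x y \<and> p x y \<le> d x y + eta"
      using less.hyps[OF S(5) S(1) US] by blast
    have pU: "ultrametric_on S p" using p(1) unfolding in_U_def by simp
    have pm: "\<forall>x\<in>S. \<forall>y\<in>S. p x y \<ge> 0 \<and> (p x y = 0 \<longleftrightarrow> x = y) \<and> p x y = p y x"
      using pU unfolding ultrametric_on_def metric_on_def by auto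
    have finSpp: "finite (Sp S p)"
    proof -
      have "Sp S p \<subseteq> (\<lambda>(x,y). p x y) ` (S \<times> S)" unfolding Sp_def by auto
      then show ?thesis using S(1) finite_subset by blast
    qed
    define M where "M = insert (r + eta) ({v \<in> Sp S p. v > r} \<union> (\<lambda>y. p y0 y) ` (S - {y0}))"
    have finM: "finite M" unfolding M_def using finSpp S(1) by auto
    define u where "u = Min M"
    have Mgt: "\<forall>v\<in>M. v > r"
    proof
      fix v assume "v \<in> M"
      then consider "v = r + eta" | "v \<in> Sp S p \<and> v > r" | "\<exists>y\<in>S - {y0}. v = p y0 y"
        unfolding M_def by blast
      then show "v > r"
      proof cases
        case 1 then show ?thesis using assms(3) by simp
      next
        case 2 then show ?thesis by simp
      next
        case 3
        then obtain y where y: "y \<in> S" "y \<noteq> y0" "v = p y0 y" by blast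
        then have "d y0 y < p y0 y" using p(2) S(3) by auto
        moreover have "r \<le> d y0 y" using rmin y S ay by auto
        ultimately show ?thesis using y by simp
      qed
    qed
    have uM: "u \<in> M" unfolding u_def using finM by (intro Min_in) (auto simp: M_def)
    have ule: "\<And>v. v \<in> M \<Longrightarrow> u \<le> v" unfolding u_def using finM by simp
    have ur: "u > r" using uM Mgt by blast
    define t where "t = (r + u) / 2"
    have t: "r < t" "t < u" using ur unfolding t_def by auto
    have teta: "t \<le> r + eta" using ule[of "r + eta"] t unfolding M_def by auto
    have tlt: "\<forall>y\<in>S. y \<noteq> y0 \<longrightarrow> t < p y0 y"
    proof (intro ballI impI)
      fix y assume "y \<in> S" "y \<noteq> y0"
      then have "p y0 y \<in> M" unfolding M_def by blast
      then show "t < p y0 y" using ule t by fastforce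
    qed
    have tnot: "t \<notin> Sp S p"
    proof
      assume "t \<in> Sp S p"
      then have "t \<in> M" using t unfolding M_def by auto
      then show False using ule t by fastforce
    qed
    define \<rho> where "\<rho> = ext a y0 t p"
    have ult: "ultrametric_on X \<rho>" unfolding \<rho>_def S(4)
      using ext_ultra[OF pU S(3) S(2) _ tlt] t rpos by simp
    have Spe: "Sp X \<rho> = insert t (Sp S p)" unfolding \<rho>_def S(4)
      using ext_Sp[OF S(3) S(2)] pm by blast
    have cS: "card S \<ge> 1" using S by (metis One_nat_def Suc_leI card_gt_0_iff empty_iff)
    have "card (Sp X \<rho>) = card X - 1"
      using Spe tnot finSpp p(1) S cS unfolding in_U_def by simp
    then have inU: "in_U X \<rho>" using fin ult unfolding in_U_def by simp
    have dsame: "\<And>y. y \<in> S \<Longrightarrow> y \<noteq> y0 \<Longrightarrow> d a y = d y0 y"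
    proof -
      fix y assume y: "y \<in> S" "y \<noteq> y0"
      have yX: "y \<in> X" "y \<noteq> a" using y S by auto
      have 1: "d a y \<le> max (d a y0) (d y0 y)" using dum ay yX by blast
      have 2: "d y0 y \<le> max (d y0 a) (d a y)" using dum ay yX by blast
      have 3: "r \<le> d a y" "r \<le> d y0 y" using rmin ay yX y by auto
      have "d y0 a = r" using ay dm by metis
      then show "d a y = d y0 y" using 1 2 3 ay by (simp add: max_def split: if_splits)
    qed
    have close: "\<forall>x\<in>X. \<forall>y\<in>X. x \<noteq> y \<longrightarrow> d x y < \<rho> x y \<and> \<rho> x y \<le> d x y + eta"
    proof (intro ballI impI)
      fix x y assume xy: "x \<in> X" "y \<in> X" "x \<noteq> y"
      have "d y0 a = d a y0" using dm ay(1,2) by simp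
      then have dya: "d y0 a = r" using ay(4) by simp
      show "d x y < \<rho> x y \<and> \<rho> x y \<le> d x y + eta"
      proof (cases "x = a")
        case True
        then show ?thesis
        proof (cases "y = y0")
          case True
          have "\<rho> x y = t" using True \<open>x = a\<close> ay(3) unfolding \<rho>_def ext_def by auto
          moreover have "d x y = r" using True \<open>x = a\<close> ay(4) by simp
          ultimately show ?thesis using t teta by linarith
        next
          case False
          then have "y \<in> S" using xy(2) True xy(3) unfolding S_def by blast
          have e: "\<rho> x y = p y0 y" using False \<open>x = a\<close> xy(3) unfolding \<rho>_def ext_def by auto
          have "d y0 y < p y0 y \<and> p y0 y \<le> d y0 y + eta" using p(2) \<open>y \<in> S\<close> S(3) False by (metis (no_types))
          moreover have "d x y = d y0 y" using \<open>x = a\<close> dsame[OF \<open>y \<in> S\<close> False] by simp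
          ultimately show ?thesis using e by linarith
        qed
      next
        case xa: False
        show ?thesis
        proof (cases "y = a")
          case True
          show ?thesis
          proof (cases "x = y0")
            case True
            have "\<rho> x y = t" using True \<open>y = a\<close> ay(3) unfolding \<rho>_def ext_def by auto
            moreover have "d x y = r" using True \<open>y = a\<close> dya by simp
            ultimately show ?thesis using t teta by linarith
          next
            case False
            have xS: "x \<in> S" using xy(1) xa unfolding S_def by blast
            have "d x a = d a x" using dm xy(1) ay(1) by simp
            have e: "\<rho> x y = p x y0" using False xa \<open>y = a\<close> unfolding \<rho>_def ext_def by auto
            have 1: "p x y0 = p y0 x" using pm xS S(3) by blast
            have 2: "d y0 x < p y0 x \<and> p y0 x \<le> d y0 x + eta" using p(2) xS S(3) False by (metis (no_types))
            have 3: "d x y = d y0 x" using \<open>y = a\<close> dsame[OF xS False] \<open>d x a = d a x\<close> by simp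
            show ?thesis using 1 2 3 e by linarith
          qed
        next
          case False
          have xyS: "x \<in> S" "y \<in> S" using xa False xy(1,2) unfolding S_def by blast+
          have "\<rho> x y = p x y" using xa False unfolding \<rho>_def ext_def by simp
          moreover have "d x y < p x y \<and> p x y \<le> d x y + eta" using xyS xy(3) p(2) by blast
          ultimately show ?thesis by linarith
        qed
      qed
    qed
    show ?thesis using inU close by blast
  qed
qed

fun dZ :: "('a \<Rightarrow> 'a \<Rightarrow> real) \<Rightarrow> ('a \<Rightarrow> 'a \<Rightarrow> real) \<Rightarrow> real \<Rightarrow> 'a + 'a \<Rightarrow> 'a + 'a \<Rightarrow> real" where
  "dZ d r e (Inl x) (Inl y) = d x y"
| "dZ d r e (Inr x) (Inr y) = r x y"
| "dZ d r e (Inl x) (Inr y) = d x y + e"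
| "dZ d r e (Inr y) (Inl x) = d x y + e"

lemma dZ_metric:
  assumes md: "metric_on X d" and mr: "metric_on X r" and e: "e > 0"
    and cl: "\<And>x y. x \<in> X \<Longrightarrow> y \<in> X \<Longrightarrow> x \<noteq> y \<Longrightarrow> d x y < r x y \<and> r x y \<le> d x y + 2 * e"
  shows "metric_on (Inl ` X \<union> Inr ` X) (dZ d r e)"
proof -
  have d1: "\<And>x y. x \<in> X \<Longrightarrow> y \<in> X \<Longrightarrow> d x y \<ge> 0 \<and> (d x y = 0 \<longleftrightarrow> x = y) \<and> d x y = d y x"
    and d2: "\<And>x y z. x \<in> X \<Longrightarrow> y \<in> X \<Longrightarrow> z \<in> X \<Longrightarrow> d x z \<le> d x y + d y z"
    using md unfolding metric_on_def by blast+
  have r1: "\<And>x y. x \<in> X \<Longrightarrow> y \<in> X \<Longrightarrow> r x y \<ge> 0 \<and> (r x y = 0 \<longleftrightarrow> x = y) \<and> r x y = r y x"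
    and r2: "\<And>x y z. x \<in> X \<Longrightarrow> y \<in> X \<Longrightarrow> z \<in> X \<Longrightarrow> r x z \<le> r x y + r y z"
    using mr unfolding metric_on_def by blast+
  have lo: "\<And>x y. x \<in> X \<Longrightarrow> y \<in> X \<Longrightarrow> d x y \<le> r x y"
    using cl d1 r1 by (metis less_eq_real_def)
  have hi: "\<And>x y. x \<in> X \<Longrightarrow> y \<in> X \<Longrightarrow> r x y \<le> d x y + 2 * e"
    using cl d1 r1 e by (metis less_eq_real_def add_0 mult_pos_pos zero_less_numeral add_pos_pos)
  have dp: "\<And>x y. x \<in> X \<Longrightarrow> y \<in> X \<Longrightarrow> d x y + e > 0" using d1 e by (meson add_nonneg_pos)
  have P1: "\<forall>u\<in>Inl ` X \<union> Inr ` X. \<forall>v\<in>Inl ` X \<union> Inr ` X. dZ d r e u v \<ge> 0 \<and> (dZ d r e u v = 0 \<longleftrightarrow> u = v) \<and> dZ d r e u v = dZ d r e v u"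
    using d1 r1 e by (auto simp: add_nonneg_pos add_pos_nonneg dp less_imp_neq[OF dp, symmetric])
  show ?thesis unfolding metric_on_def
  proof (intro conjI P1 ballI)
    fix u v w assume uvw: "u \<in> Inl ` X \<union> Inr ` X" "v \<in> Inl ` X \<union> Inr ` X" "w \<in> Inl ` X \<union> Inr ` X"
    then obtain x y z where xyz: "x \<in> X" "y \<in> X" "z \<in> X"
      "u = Inl x \<or> u = Inr x" "v = Inl y \<or> v = Inr y" "w = Inl z \<or> w = Inr z" by blast
    have A: "d x z \<le> d x y + d y z" "d x y \<le> d x z + d z y" "d y z \<le> d y x + d x z" "d y x \<le> d y z + d z x" "d z y \<le> d z x + d x y" "d z x \<le> d z y + d y x"
      using d2 xyz by auto
    have B: "r x z \<le> r x y + r y z" "r x y \<le> r x z + r z y" "r y z \<le> r y x + r x z" "r y x \<le> r y z + r z x" "r z y \<le> r z x + r x y" "r z x \<le> r z y + r y x"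
      using r2 xyz by auto
    have C: "d x y \<le> r x y" "d x z \<le> r x z" "d y x \<le> r y x" "d y z \<le> r y z" "d z x \<le> r z x" "d z y \<le> r z y"
      using lo xyz by auto
    have D: "r x y \<le> d x y + 2*e" "r x z \<le> d x z + 2*e" "r y z \<le> d y z + 2*e"
      using hi xyz by auto
    have S: "d x y = d y x" "d x z = d z x" "d y z = d z y" "r x y = r y x" "r x z = r z x" "r y z = r z y"
      "d x y \<ge> 0" "d x z \<ge> 0" "d y z \<ge> 0"
      using d1 r1 xyz by auto
    show "dZ d r e u w \<le> dZ d r e u v + dZ d r e v w"
      using xyz(4,5,6) A B C D S e by (elim disjE; simp; linarith)
  qed
qed

theorem mainTheorem16:
  fixes X :: "'a set" and d :: "'a \<Rightarrow> 'a \<Rightarrow> real" and eps :: real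
  assumes "finite X" and "ultrametric_on X d" and "eps > 0"
  shows "\<exists>(Y :: 'a set) (\<rho> :: 'a \<Rightarrow> 'a \<Rightarrow> real).
           in_U Y \<rho> \<and> card X = card Y \<and> GH_dist_less X d Y \<rho> eps"
proof -
  obtain \<rho> where r: "in_U X \<rho>" "\<forall>x\<in>X. \<forall>y\<in>X. x \<noteq> y \<longrightarrow> d x y < \<rho> x y \<and> \<rho> x y \<le> d x y + eps"
    using build[OF assms] by blast
  have md: "metric_on X d" using assms(2) unfolding ultrametric_on_def by simp
  have mr: "metric_on X \<rho>" using r(1) unfolding in_U_def ultrametric_on_def by simp
  have e: "eps / 2 > 0" using assms(3) by simp
  have cl: "\<And>x y. x \<in> X \<Longrightarrow> y \<in> X \<Longrightarrow> x \<noteq> y \<Longrightarrow> d x y < \<rho> x y \<and> \<rho> x y \<le> d x y + 2 * (eps / 2)"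
    using r(2) by simp
  have M: "metric_on (Inl ` X \<union> Inr ` X) (dZ d \<rho> (eps / 2))"
    using dZ_metric[OF md mr e cl] by blast
  have d0: "\<And>x. x \<in> X \<Longrightarrow> d x x = 0" using md unfolding metric_on_def by blast
  have "GH_dist_less X d X \<rho> eps"
    unfolding GH_dist_less_def
  proof (intro exI conjI)
    show "metric_on (Inl ` X \<union> Inr ` X) (dZ d \<rho> (eps / 2))" by (rule M)
    show "isometric_embedding Inl X d (Inl ` X \<union> Inr ` X) (dZ d \<rho> (eps / 2))"
      unfolding isometric_embedding_def by auto
    show "isometric_embedding Inr X \<rho> (Inl ` X \<union> Inr ` X) (dZ d \<rho> (eps / 2))"
      unfolding isometric_embedding_def by auto
    show "\<forall>x\<in>X. \<exists>y\<in>X. dZ d \<rho> (eps / 2) (Inl x) (Inr y) < eps"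
      using d0 assms(3) by (intro ballI bexI[where x = x for x]) auto
    show "\<forall>y\<in>X. \<exists>x\<in>X. dZ d \<rho> (eps / 2) (Inl x) (Inr y) < eps"
      using d0 assms(3) by (intro ballI bexI[where x = y for y]) auto
  qed
  then show ?thesis using r(1) by blast
qed

end
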